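(* (i) Let $C'$ be a ternary Euclidean LCD $[n,k]$ code with $k\ge1$. Then there exist a ternary Euclidean LCD $[n,k-1]$ code $C$ with generator matrix $G$ and a vector $\mathbf{y}\in C^{\perp_E}$ with $wt(\mathbf{y})\not\equiv 0\pmod 3$ such that $C'$ is the code with generator matrix $\begin{pmatrix}\mathbf{y}\\ G\end{pmatrix}$. (ii) Let $C'$ be a quaternary Hermitian LCD $[n,k]$ code with $k\ge 1$. Then there exist a quaternary Hermitian LCD $[n,k-1]$ code $C$ with generator matrix $G$ and a vector $\mathbf{y}\in C^{\perp_H}$ of odd Hamming weight such that $C'$ is the code with generator matrix $\begin{pmatrix}\mathbf{y}\\ G\end{pmatrix}$.
   Context: Ternary and quaternary codes are linear codes over $\mathbb{F}_3$ and $\mathbb{F}_4$. An $[n,k]$ code is a $k$-dimensional subspace; a generator matrix has rows forming a basis. $wt$ is the Hamming weight. Euclidean inner product $\langle x,y\rangle_E=\sum x_iy_i$ with dual $C^{\perp_E}$; on $\mathbb{F}_4^n$ the Hermitian inner product is $\langle x,y\rangle_H=\sum x_iy_i^2$ with dual $C^{\perp_H}$. A code is (Euclidean/Hermitian) LCD if $C\cap C^{\perp}=\{0\}$. *)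

theory Defs
  imports "HOL-Analysis.Analysis"
begin

datatype F3 = T0 | T1 | T2

fun f3_add :: "F3 \<Rightarrow> F3 \<Rightarrow> F3" where
  "f3_add T0 b = b"
| "f3_add a T0 = a"
| "f3_add T1 T1 = T2"
| "f3_add T1 T2 = T0"
| "f3_add T2 T1 = T0"
| "f3_add T2 T2 = T1"

fun f3_mul :: "F3 \<Rightarrow> F3 \<Rightarrow> F3" where
  "f3_mul T0 b = T0"
| "f3_mul a T0 = T0"
| "f3_mul T1 b = b"
| "f3_mul a T1 = a"
| "f3_mul T2 T2 = T1"

fun f3_neg :: "F3 \<Rightarrow> F3" where
  "f3_neg T0 = T0" | "f3_neg T1 = T2" | "f3_neg T2 = T1"

instantiation F3 :: field
begin
definition "0 = T0"
definition "1 = T1"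
definition "a + b = f3_add a b"
definition "- a = f3_neg a"
definition "a - b = f3_add a (f3_neg b)"
definition "a * b = f3_mul a b"
definition "inverse (a::F3) = a"
definition divide_F3 :: "F3 \<Rightarrow> F3 \<Rightarrow> F3" where "divide_F3 a b = f3_mul a b"
instance proof
  fix a b c :: F3
  show "a + b + c = a + (b + c)" by (cases a; cases b; cases c; simp add: zero_F3_def one_F3_def plus_F3_def uminus_F3_def minus_F3_def times_F3_def inverse_F3_def divide_F3_def)
  show "a + b = b + a" by (cases a; cases b; simp add: zero_F3_def one_F3_def plus_F3_def uminus_F3_def minus_F3_def times_F3_def inverse_F3_def divide_F3_def)
  show "0 + a = a" by (cases a; simp add: zero_F3_def one_F3_def plus_F3_def uminus_F3_def minus_F3_def times_F3_def inverse_F3_def divide_F3_def)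
  show "- a + a = 0" by (cases a; simp add: zero_F3_def one_F3_def plus_F3_def uminus_F3_def minus_F3_def times_F3_def inverse_F3_def divide_F3_def)
  show "a - b = a + - b" by (cases a; cases b; simp add: zero_F3_def one_F3_def plus_F3_def uminus_F3_def minus_F3_def times_F3_def inverse_F3_def divide_F3_def)
  show "a * b * c = a * (b * c)" by (cases a; cases b; cases c; simp add: zero_F3_def one_F3_def plus_F3_def uminus_F3_def minus_F3_def times_F3_def inverse_F3_def divide_F3_def)
  show "a * b = b * a" by (cases a; cases b; simp add: zero_F3_def one_F3_def plus_F3_def uminus_F3_def minus_F3_def times_F3_def inverse_F3_def divide_F3_def)
  show "1 * a = a" by (cases a; simp add: zero_F3_def one_F3_def plus_F3_def uminus_F3_def minus_F3_def times_F3_def inverse_F3_def divide_F3_def)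
  show "(a + b) * c = a * c + b * c" by (cases a; cases b; cases c; simp add: zero_F3_def one_F3_def plus_F3_def uminus_F3_def minus_F3_def times_F3_def inverse_F3_def divide_F3_def)
  show "(0::F3) \<noteq> 1" by (simp add: zero_F3_def one_F3_def plus_F3_def uminus_F3_def minus_F3_def times_F3_def inverse_F3_def divide_F3_def)
  show "a \<noteq> 0 \<Longrightarrow> inverse a * a = 1" by (cases a; simp add: zero_F3_def one_F3_def plus_F3_def uminus_F3_def minus_F3_def times_F3_def inverse_F3_def divide_F3_def)
  show "Rings.divide a b = a * inverse b" by (cases a; cases b; simp add: zero_F3_def one_F3_def plus_F3_def uminus_F3_def minus_F3_def times_F3_def inverse_F3_def divide_F3_def)
  show "inverse (0::F3) = 0" by (simp add: zero_F3_def one_F3_def plus_F3_def uminus_F3_def minus_F3_def times_F3_def inverse_F3_def divide_F3_def)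
qed
end

section \<open>The field F4 = GF(4) = {0, 1, w, w^2} with w^2 = w + 1\<close>

datatype F4 = Q0 | Q1 | QW | QW2

fun f4_add :: "F4 \<Rightarrow> F4 \<Rightarrow> F4" where
  "f4_add Q0 b = b"
| "f4_add a Q0 = a"
| "f4_add Q1 Q1 = Q0"
| "f4_add Q1 QW = QW2"
| "f4_add Q1 QW2 = QW"
| "f4_add QW Q1 = QW2"
| "f4_add QW QW = Q0"
| "f4_add QW QW2 = Q1"
| "f4_add QW2 Q1 = QW"
| "f4_add QW2 QW = Q1"
| "f4_add QW2 QW2 = Q0"

fun f4_mul :: "F4 \<Rightarrow> F4 \<Rightarrow> F4" where
  "f4_mul Q0 b = Q0"
| "f4_mul a Q0 = Q0"
| "f4_mul Q1 b = b"
| "f4_mul a Q1 = a"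
| "f4_mul QW QW = QW2"
| "f4_mul QW QW2 = Q1"
| "f4_mul QW2 QW = Q1"
| "f4_mul QW2 QW2 = QW"

fun f4_inv :: "F4 \<Rightarrow> F4" where
  "f4_inv Q0 = Q0" | "f4_inv Q1 = Q1" | "f4_inv QW = QW2" | "f4_inv QW2 = QW"

instantiation F4 :: field
begin
definition "0 = Q0"
definition "1 = Q1"
definition "a + b = f4_add a b"
definition "- (a::F4) = a"
definition "a - b = f4_add a b"
definition "a * b = f4_mul a b"
definition "inverse a = f4_inv a"
definition divide_F4 :: "F4 \<Rightarrow> F4 \<Rightarrow> F4" where "divide_F4 a b = f4_mul a (f4_inv b)"
instance proof
  fix a b c :: F4
  show "a + b + c = a + (b + c)" by (cases a; cases b; cases c; simp add: zero_F4_def one_F4_def plus_F4_def uminus_F4_def minus_F4_def times_F4_def inverse_F4_def divide_F4_def)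
  show "a + b = b + a" by (cases a; cases b; simp add: zero_F4_def one_F4_def plus_F4_def uminus_F4_def minus_F4_def times_F4_def inverse_F4_def divide_F4_def)
  show "0 + a = a" by (cases a; simp add: zero_F4_def one_F4_def plus_F4_def uminus_F4_def minus_F4_def times_F4_def inverse_F4_def divide_F4_def)
  show "- a + a = 0" by (cases a; simp add: zero_F4_def one_F4_def plus_F4_def uminus_F4_def minus_F4_def times_F4_def inverse_F4_def divide_F4_def)
  show "a - b = a + - b" by (cases a; cases b; simp add: zero_F4_def one_F4_def plus_F4_def uminus_F4_def minus_F4_def times_F4_def inverse_F4_def divide_F4_def)
  show "a * b * c = a * (b * c)" by (cases a; cases b; cases c; simp add: zero_F4_def one_F4_def plus_F4_def uminus_F4_def minus_F4_def times_F4_def inverse_F4_def divide_F4_def)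
  show "a * b = b * a" by (cases a; cases b; simp add: zero_F4_def one_F4_def plus_F4_def uminus_F4_def minus_F4_def times_F4_def inverse_F4_def divide_F4_def)
  show "1 * a = a" by (cases a; simp add: zero_F4_def one_F4_def plus_F4_def uminus_F4_def minus_F4_def times_F4_def inverse_F4_def divide_F4_def)
  show "(a + b) * c = a * c + b * c" by (cases a; cases b; cases c; simp add: zero_F4_def one_F4_def plus_F4_def uminus_F4_def minus_F4_def times_F4_def inverse_F4_def divide_F4_def)
  show "(0::F4) \<noteq> 1" by (simp add: zero_F4_def one_F4_def plus_F4_def uminus_F4_def minus_F4_def times_F4_def inverse_F4_def divide_F4_def)
  show "a \<noteq> 0 \<Longrightarrow> inverse a * a = 1" by (cases a; simp add: zero_F4_def one_F4_def plus_F4_def uminus_F4_def minus_F4_def times_F4_def inverse_F4_def divide_F4_def)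
  show "Rings.divide a b = a * inverse b" by (cases a; cases b; simp add: zero_F4_def one_F4_def plus_F4_def uminus_F4_def minus_F4_def times_F4_def inverse_F4_def divide_F4_def)
  show "inverse (0::F4) = 0" by (simp add: zero_F4_def one_F4_def plus_F4_def uminus_F4_def minus_F4_def times_F4_def inverse_F4_def divide_F4_def)
qed
end

definition linear_code :: "('a::field ^ 'n) set \<Rightarrow> nat \<Rightarrow> bool" where
  "linear_code C k \<longleftrightarrow> vec.subspace C \<and> vec.dim C = k"

definition wt :: "'a::zero ^ 'n \<Rightarrow> nat" where
  "wt x = card {i. x $ i \<noteq> 0}"

definition inner_E :: "'a::field ^ 'n \<Rightarrow> 'a ^ 'n \<Rightarrow> 'a" where
  "inner_E x y = (\<Sum>i\<in>UNIV. x $ i * y $ i)"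

definition inner_H :: "F4 ^ 'n \<Rightarrow> F4 ^ 'n \<Rightarrow> F4" where
  "inner_H x y = (\<Sum>i\<in>UNIV. x $ i * (y $ i)^2)"

definition dual_E :: "('a::field ^ 'n) set \<Rightarrow> ('a ^ 'n) set" where
  "dual_E C = {x. \<forall>c\<in>C. inner_E x c = 0}"

definition dual_H :: "(F4 ^ 'n) set \<Rightarrow> (F4 ^ 'n) set" where
  "dual_H C = {x. \<forall>c\<in>C. inner_H x c = 0}"

definition LCD_E :: "('a::field ^ 'n) set \<Rightarrow> bool" where
  "LCD_E C \<longleftrightarrow> C \<inter> dual_E C = {0}"

definition LCD_H :: "(F4 ^ 'n) set \<Rightarrow> bool" where
  "LCD_H C \<longleftrightarrow> C \<inter> dual_H C = {0}"

definition gen_matrix :: "('a::field ^ 'n) list \<Rightarrow> ('a ^ 'n) set \<Rightarrow> bool" where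
  "gen_matrix gs C \<longleftrightarrow> distinct gs \<and> vec.independent (set gs) \<and> vec.span (set gs) = C"

end

theory Submission imports Defs begin

lemma split_lcd:
  fixes f :: "'a::field^'n \<Rightarrow> 'a^'n \<Rightarrow> 'a" and C' :: "('a^'n) set"
  assumes add: "\<And>x z w. f (x+z) w = f x w + f z w"
  and scl: "\<And>c x w. f (c *s x) w = c * f x w"
  and rfl: "\<And>x w. f x w = 0 \<longleftrightarrow> f w x = 0"
  and sub: "vec.subspace C'" and dimC': "vec.dim C' = k"
  and lcd: "C' \<inter> {x. \<forall>c\<in>C'. f x c = 0} = {0}"
  and yC: "y \<in> C'" and yy: "f y y \<noteq> 0"
  shows "\<exists>C G. vec.subspace C \<and> vec.dim C = k - 1 \<and> C \<inter> {x. \<forall>c\<in>C. f x c = 0} = {0}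
     \<and> gen_matrix G C \<and> (\<forall>c\<in>C. f y c = 0) \<and> gen_matrix (y#G) C'"
proof -
  define C where "C = {x\<in>C'. f x y = 0}"
  have f0: "f 0 w = 0" for w using scl[of 0 0 w] by simp
  have fdiff: "f (x - z) w = f x w - f z w" for x z w
    using add[of "x - z" z w] by (simp add: algebra_simps)
  have subC: "vec.subspace C"
    unfolding vec.subspace_def C_def
    using sub f0 add scl by (auto simp: vec.subspace_0 vec.subspace_add vec.subspace_scale)
  have CC': "C \<subseteq> C'" unfolding C_def by auto
  obtain B where B: "B \<subseteq> C" "vec.independent B" "C \<subseteq> vec.span B" "card B = vec.dim C"
    using vec.basis_exists by blast
  have finB: "finite B" using B(2) vec.finiteI_independent by blast
  obtain G where G: "set G = B" "distinct G" using finite_distinct_list[OF finB] by blast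
  have spB: "vec.span B = C" using vec.span_subspace[OF B(1) B(3) subC] .
  have yn: "y \<notin> C" using yy unfolding C_def by auto
  hence yB: "y \<notin> B" using B(1) by auto
  have ind: "vec.independent (insert y B)" using vec.independent_insertI[of y B] spB yn B(2) by auto
  have sp: "vec.span (insert y B) = C'"
  proof
    show "vec.span (insert y B) \<subseteq> C'"
      using vec.span_minimal[of "insert y B" C'] yC B(1) CC' sub by auto
  next
    show "C' \<subseteq> vec.span (insert y B)"
    proof
      fix x assume x: "x \<in> C'"
      define t where "t = f x y / f y y"
      have "x - t *s y \<in> C"
        unfolding C_def using x yC sub yy
        by (auto simp: fdiff scl t_def vec.subspace_diff vec.subspace_scale)
      thus "x \<in> vec.span (insert y B)" unfolding vec.span_insert spB by blast
    qed
  qed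
  have "vec.dim C' = card B + 1"
    using vec.dim_span_eq_card_independent[OF ind] sp finB yB by simp
  hence dimC: "vec.dim C = k - 1" using B(4) dimC' by simp
  have lcdC: "C \<inter> {x. \<forall>c\<in>C. f x c = 0} = {0}"
  proof -
    have "x = 0" if x: "x \<in> C" "\<forall>c\<in>C. f x c = 0" for x
    proof -
      have "\<forall>c\<in>C'. f x c = 0"
      proof
        fix c assume c: "c \<in> C'"
        define t where "t = f c y / f y y"
        have d: "c - t *s y \<in> C"
          unfolding C_def using c yC sub yy
          by (auto simp: fdiff scl t_def vec.subspace_diff vec.subspace_scale)
        have "f x (c - t *s y) = 0" using x d by auto
        hence 1: "f (c - t *s y) x = 0" using rfl by blast
        have "f x y = 0" using x unfolding C_def by auto
        hence 2: "f y x = 0" using rfl by blast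
        have "f c x = 0" using 1 2 by (simp add: fdiff scl)
        thus "f x c = 0" using rfl by blast
      qed
      thus ?thesis using lcd x CC' by auto
    qed
    moreover have "0 \<in> C" using subC vec.subspace_0 by blast
    ultimately show ?thesis using f0 by auto
  qed
  have ydual: "\<forall>c\<in>C. f y c = 0" using rfl unfolding C_def by auto
  have "gen_matrix G C" unfolding gen_matrix_def using G spB B(2) by auto
  moreover have "gen_matrix (y#G) C'" unfolding gen_matrix_def using G sp ind yB by auto
  ultimately show ?thesis using subC dimC lcdC ydual by blast
qed

lemmas F3defs = zero_F3_def one_F3_def plus_F3_def uminus_F3_def minus_F3_def times_F3_def inverse_F3_def divide_F3_def
lemmas F4defs = zero_F4_def one_F4_def plus_F4_def uminus_F4_def minus_F4_def times_F4_def inverse_F4_def divide_F4_def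

lemma three_F3: "(3::F3) = 0"
proof -
  have "(3::F3) = 1 + 1 + 1" by simp
  also have "\<dots> = 0" by (simp add: F3defs)
  finally show ?thesis .
qed

lemma two_F4: "(2::F4) = 0"
proof -
  have "(2::F4) = 1 + 1" by simp
  also have "\<dots> = 0" by (simp add: F4defs)
  finally show ?thesis .
qed

lemma two_F3: "(2::F3) \<noteq> 0"
proof -
  have "(2::F3) = 1 + 1" by simp
  also have "\<dots> \<noteq> 0" by (simp add: F3defs)
  finally show ?thesis .
qed

lemma ofnat_F3: "m mod 3 = 0 \<Longrightarrow> (of_nat m :: F3) = 0"
proof -
  assume "m mod 3 = 0"
  then have "m = 3 * (m div 3)" by auto
  hence "(of_nat m :: F3) = of_nat 3 * of_nat (m div 3)" by (metis of_nat_mult)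
  thus ?thesis using three_F3 by simp
qed

lemma ofnat_F4: "even m \<Longrightarrow> (of_nat m :: F4) = 0"
proof -
  assume "even m"
  then have "m = 2 * (m div 2)" by auto
  hence "(of_nat m :: F4) = of_nat 2 * of_nat (m div 2)" by (metis of_nat_mult)
  thus ?thesis using two_F4 by simp
qed

lemma innerE_add: "inner_E (x + z) w = inner_E x w + inner_E (z::'a::field^'n) w"
  unfolding inner_E_def by (simp add: distrib_right sum.distrib)
lemma innerE_scl: "inner_E (c *s x) w = c * inner_E (x::'a::field^'n) w"
  unfolding inner_E_def by (simp add: sum_distrib_left mult.assoc)
lemma innerE_sym: "inner_E x w = inner_E (w::'a::field^'n) x"
  unfolding inner_E_def by (simp add: mult.commute)

lemma F3_sq: "(a::F3) * a = of_bool (a \<noteq> 0)"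
  by (cases a) (simp_all add: F3defs)

lemma innerE_self: "inner_E (y::F3^'n) y = of_nat (wt y)"
  unfolding inner_E_def wt_def by (simp add: F3_sq)

lemma F4_cube: "(a::F4) * a^2 = of_bool (a \<noteq> 0)"
  by (cases a) (simp_all add: F4defs power2_eq_square)

lemma innerH_self: "inner_H (y::F4^'n) y = of_nat (wt y)"
  unfolding inner_H_def wt_def by (simp add: F4_cube)

lemma innerH_add: "inner_H (x + z) w = inner_H x w + inner_H z w"
  unfolding inner_H_def by (simp add: distrib_right sum.distrib)
lemma innerH_scl: "inner_H (c *s x) w = c * inner_H x w"
  unfolding inner_H_def by (simp add: sum_distrib_left mult.assoc)

lemma F4_frob: "((a::F4) + b)^2 = a^2 + b^2"
  by (cases a; cases b) (simp_all add: F4defs power2_eq_square)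

lemma F4_sum_sq: "finite A \<Longrightarrow> (\<Sum>i\<in>A. g i :: F4)^2 = (\<Sum>i\<in>A. (g i)^2)"
  by (induction A rule: finite_induct) (simp_all add: F4_frob)

lemma F4_pt: "((a::F4) * b^2)^2 = b * a^2"
  by (cases a; cases b) (simp_all add: F4defs power2_eq_square)

lemma innerH_swap: "inner_H w x = (inner_H x w)^2"
  unfolding inner_H_def by (simp add: F4_sum_sq F4_pt)

lemma innerH_rfl: "inner_H x w = 0 \<longleftrightarrow> inner_H w x = 0"
  using innerH_swap[of w x] by simp

lemma F4_pt2: "((a::F4) + b) * (a+b)^2 = a*a^2 + b*b^2 + (a*b^2 + b*a^2)"
  by (cases a; cases b) (simp_all add: F4defs power2_eq_square)

lemma innerH_addself: "inner_H (x+z) (x+z) = inner_H x x + inner_H z z + (inner_H x z + inner_H z x)"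
  unfolding inner_H_def by (simp add: F4_pt2 sum.distrib)

lemma F4_key: "(p::F4) + p^2 = 0 \<Longrightarrow> QW*p + (QW*p)^2 = 0 \<Longrightarrow> p = 0"
  by (cases p) (simp_all add: F4defs power2_eq_square)


lemma part1:
  fixes C3 :: "(F3 ^ 'n) set"
  assumes "linear_code C3 k3" "LCD_E C3" "k3 \<ge> 1"
  shows "\<exists>C G (y :: F3 ^ 'n). linear_code C (k3 - 1) \<and> LCD_E C \<and> gen_matrix G C \<and>
          y \<in> dual_E C \<and> wt y mod 3 \<noteq> 0 \<and> gen_matrix (y # G) C3"
proof -
  have sub: "vec.subspace C3" and dim: "vec.dim C3 = k3" using assms(1) unfolding linear_code_def by auto
  have lcd: "C3 \<inter> {x. \<forall>c\<in>C3. inner_E x c = 0} = {0}" using assms(2) unfolding LCD_E_def dual_E_def .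
  obtain y where y: "y \<in> C3" "inner_E y y \<noteq> 0"
  proof (rule ccontr)
    assume "\<not> thesis"
    with that have allz: "\<forall>x\<in>C3. inner_E x x = 0" by blast
    have "inner_E x z = 0" if "x \<in> C3" "z \<in> C3" for x z
    proof -
      have "x + z \<in> C3" using sub that vec.subspace_add by blast
      hence "0 = inner_E (x+z) (x+z)" using allz by auto
      also have "\<dots> = inner_E x x + inner_E z z + 2 * inner_E x z"
      proof -
        have a: "inner_E x (x+z) = inner_E x x + inner_E z x"
          using innerE_sym[of x "x+z"] innerE_add[of x z x] by simp
        have b: "inner_E z (x+z) = inner_E x z + inner_E z z"
          using innerE_sym[of z "x+z"] innerE_add[of x z z] by simp
        have c: "inner_E z x = inner_E x z" using innerE_sym .
        show ?thesis unfolding innerE_add a b c by (simp only: mult_2 add.assoc add.left_commute add.commute)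
      qed
      finally have "2 * inner_E x z = 0" using allz that by simp
      thus ?thesis using two_F3 by simp
    qed
    hence "C3 \<subseteq> {0}" using lcd by blast
    hence "vec.dim C3 = 0" by simp
    thus False using dim assms(3) by simp
  qed
  have rflE: "\<And>x w. inner_E x w = 0 \<longleftrightarrow> inner_E w x = 0" using innerE_sym by metis
  have ex: "\<exists>C G. vec.subspace C \<and> vec.dim C = k3 - 1 \<and> C \<inter> {x. \<forall>c\<in>C. inner_E x c = 0} = {0}
     \<and> gen_matrix G C \<and> (\<forall>c\<in>C. inner_E y c = 0) \<and> gen_matrix (y#G) C3"
    by (rule split_lcd[of inner_E C3 k3 y, OF innerE_add innerE_scl rflE sub dim lcd y])
  then obtain C G where CG: "vec.subspace C \<and> vec.dim C = k3 - 1 \<and> C \<inter> {x. \<forall>c\<in>C. inner_E x c = 0} = {0}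
     \<and> gen_matrix G C \<and> (\<forall>c\<in>C. inner_E y c = 0) \<and> gen_matrix (y#G) C3" by (elim exE)
  have "wt y mod 3 \<noteq> 0" using y(2) ofnat_F3[of "wt y"] innerE_self[of y] by auto
  show ?thesis unfolding linear_code_def LCD_E_def dual_E_def
    apply (rule exI[of _ C], rule exI[of _ G], rule exI[of _ y])
    using CG \<open>wt y mod 3 \<noteq> 0\<close> by simp
qed

lemma part2:
  fixes C4 :: "(F4 ^ 'm) set"
  assumes "linear_code C4 k4" "LCD_H C4" "k4 \<ge> 1"
  shows "\<exists>C G (y :: F4 ^ 'm). linear_code C (k4 - 1) \<and> LCD_H C \<and> gen_matrix G C \<and>
          y \<in> dual_H C \<and> odd (wt y) \<and> gen_matrix (y # G) C4"
proof -
  have sub: "vec.subspace C4" and dim: "vec.dim C4 = k4" using assms(1) unfolding linear_code_def by auto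
  have lcd: "C4 \<inter> {x. \<forall>c\<in>C4. inner_H x c = 0} = {0}" using assms(2) unfolding LCD_H_def dual_H_def .
  obtain y where y: "y \<in> C4" "inner_H y y \<noteq> 0"
  proof (rule ccontr)
    assume "\<not> thesis"
    with that have allz: "\<forall>x\<in>C4. inner_H x x = 0" by blast
    have tr: "inner_H x z + inner_H z x = 0" if "x \<in> C4" "z \<in> C4" for x z
    proof -
      have "x + z \<in> C4" using sub that vec.subspace_add by blast
      hence "0 = inner_H (x+z) (x+z)" using allz by auto
      thus ?thesis using allz that by (simp add: innerH_addself)
    qed
    have "inner_H x z = 0" if "x \<in> C4" "z \<in> C4" for x z
    proof -
      have "QW *s x \<in> C4" using sub that vec.subspace_scale by blast
      have e1: "inner_H z (QW *s x) = (QW * inner_H x z)^2"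
        using innerH_swap[of z "QW *s x"] innerH_scl[of QW x z] by argo
      have e2: "inner_H (QW *s x) z = QW * inner_H x z" by (rule innerH_scl)
      have "QW * inner_H x z + (QW * inner_H x z)^2 = 0"
        using tr[OF \<open>QW *s x \<in> C4\<close> that(2)] unfolding e1 e2 .
      moreover have "inner_H x z + (inner_H x z)^2 = 0"
        using tr[OF that] innerH_swap[of z x] by argo
      ultimately show ?thesis using F4_key by blast
    qed
    hence "C4 \<subseteq> {0}" using lcd by blast
    hence "vec.dim C4 = 0" by simp
    thus False using dim assms(3) by simp
  qed
  have ex: "\<exists>C G. vec.subspace C \<and> vec.dim C = k4 - 1 \<and> C \<inter> {x. \<forall>c\<in>C. inner_H x c = 0} = {0}
     \<and> gen_matrix G C \<and> (\<forall>c\<in>C. inner_H y c = 0) \<and> gen_matrix (y#G) C4"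
    by (rule split_lcd[of inner_H C4 k4 y, OF innerH_add innerH_scl innerH_rfl sub dim lcd y])
  then obtain C G where CG: "vec.subspace C \<and> vec.dim C = k4 - 1 \<and> C \<inter> {x. \<forall>c\<in>C. inner_H x c = 0} = {0}
     \<and> gen_matrix G C \<and> (\<forall>c\<in>C. inner_H y c = 0) \<and> gen_matrix (y#G) C4" by (elim exE)
  have "odd (wt y)" using y(2) ofnat_F4[of "wt y"] innerH_self[of y] by auto
  show ?thesis unfolding linear_code_def LCD_H_def dual_H_def
    apply (rule exI[of _ C], rule exI[of _ G], rule exI[of _ y])
    using CG \<open>odd (wt y)\<close> by simp
qed

theorem theorem3p12:
  fixes C3 :: "(F3 ^ 'n) set" and k3 :: nat
    and C4 :: "(F4 ^ 'm) set" and k4 :: nat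
  shows
   "(linear_code C3 k3 \<and> LCD_E C3 \<and> k3 \<ge> 1 \<longrightarrow>
       (\<exists>C G (y :: F3 ^ 'n). linear_code C (k3 - 1) \<and> LCD_E C \<and> gen_matrix G C \<and>
          y \<in> dual_E C \<and> wt y mod 3 \<noteq> 0 \<and> gen_matrix (y # G) C3))
  \<and> (linear_code C4 k4 \<and> LCD_H C4 \<and> k4 \<ge> 1 \<longrightarrow>
       (\<exists>C G (y :: F4 ^ 'm). linear_code C (k4 - 1) \<and> LCD_H C \<and> gen_matrix G C \<and>
          y \<in> dual_H C \<and> odd (wt y) \<and> gen_matrix (y # G) C4))"
  using part1 part2 by blast

end
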